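(* Let $I$ be an index set and $p_r,q_r\in\mathbb C\setminus\{0\}$ for $r\in I$. There exists a homeomorphism $f\colon\mathbb C\to\mathbb C$ with $f(p_rw)=q_rf(w)$ for all $w\in\mathbb C$ and all $r\in I$ if and only if there exists a complex number $\alpha$ with $\operatorname{Re}\alpha>-1$ such that either $q_r=p_r|p_r|^{\alpha}$ for all $r\in I$, or $q_r=\overline{p_r}\,|p_r|^{\alpha}$ for all $r\in I$.
   Context: For a positive real $t$ and complex $\alpha$, $t^\alpha=e^{\alpha\ln t}$. *)

theory Defs
  imports "HOL-Analysis.Analysis"
begin

definition rpow_c :: "real \<Rightarrow> complex \<Rightarrow> complex" where
  "rpow_c t a = exp (a * of_real (ln t))"

end

theory Submission
  imports Defs "HOL-Analysis.Kronecker_Approximation_Theorem"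
begin


lemma dirichlet_kill:
  fixes D :: complex and x x0 :: real
  assumes x0: "x0 > 0"
    and H: "\<And>e. e > 0 \<Longrightarrow> \<exists>\<delta>>0. \<forall>a b::int. \<bar>of_int a*x - of_int b*x0\<bar> < \<delta> \<longrightarrow> norm (of_int a * D) < e"
  shows "D = 0"
proof (rule ccontr)
  assume D: "D \<noteq> 0"
  then obtain \<delta> where d: "\<delta> > 0" and dH: "\<forall>a b::int. \<bar>of_int a*x - of_int b*x0\<bar> < \<delta> \<longrightarrow> norm (of_int a * D) < norm D"
    using H[of "norm D"] by auto
  obtain N :: nat where N: "N > x0 / \<delta>" using reals_Archimedean2 by blast
  have Npos: "N > 0" using N x0 d
    by (metis divide_pos_pos of_nat_0_less_iff order.strict_trans)
  obtain h k where k: "0 < k" "\<bar>of_int k * (x/x0) - of_int h\<bar> < 1/N"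
    using Dirichlet_approx[OF Npos, of "x/x0"] by blast
  have "\<bar>of_int k * x - of_int h * x0\<bar> = x0 * \<bar>of_int k * (x/x0) - of_int h\<bar>"
    using x0 by (simp add: field_simps abs_mult[symmetric])
  also have "\<dots> < x0 * (1/N)" using k x0 by (intro mult_strict_left_mono) auto
  also have "\<dots> < \<delta>" using N x0 d Npos by (simp add: field_simps)
  finally have "norm (of_int k * D) < norm D" using dH by blast
  moreover have "norm (of_int k * D) \<ge> norm D"
  proof -
    have "norm (of_int k * D) = \<bar>of_int k\<bar> * norm D" by (simp add: norm_mult)
    moreover have "\<bar>real_of_int k\<bar> \<ge> 1" using k by linarith
    ultimately show ?thesis using mult_right_mono[of 1 "\<bar>real_of_int k\<bar>" "norm D"] by simp
  qed
  ultimately show False by simp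
qed

lemma const_exp:
  fixes k :: "complex \<Rightarrow> complex"
  assumes contk: "continuous_on UNIV k" and e: "\<And>z. exp (k z) = c"
  shows "k z = k 0"
proof -
  have "k constant_on UNIV"
  proof (rule continuous_discrete_range_constant[OF connected_UNIV contk])
    fix x :: complex
    show "\<exists>e>0. \<forall>y. y \<in> UNIV \<and> k y \<noteq> k x \<longrightarrow> e \<le> norm (k y - k x)"
    proof (intro exI[of _ "2*pi"] conjI allI impI)
      fix y assume "y \<in> UNIV \<and> k y \<noteq> k x"
      moreover have "exp (k y) = exp (k x)" using e by simp
      then obtain n :: int where n: "k y = k x + (of_int (2 * n) * pi) * \<i>" using exp_eq by blast
      ultimately have "n \<noteq> 0" by auto
      hence "norm (k y - k x) = 2 * pi * \<bar>of_int n\<bar>" using n by (simp add: norm_mult)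
      moreover have "\<bar>real_of_int n\<bar> \<ge> 1" using \<open>n \<noteq> 0\<close> by linarith
      ultimately show "2 * pi \<le> norm (k y - k x)" by simp
    qed simp
  qed
  thus ?thesis unfolding constant_on_def by auto
qed

locale liftF =
  fixes F :: "complex \<Rightarrow> complex"
  assumes contF: "continuous_on UNIV F"
begin

definition Psi where "Psi t = F t - F 0"
definition H where "H = {t. \<forall>z. F (z + t) = F z + Psi t}"

lemma H_add: assumes "s \<in> H" "t \<in> H" shows "s + t \<in> H" "Psi (s+t) = Psi s + Psi t"
proof -
  have t: "\<And>z. F (z + t) = F z + Psi t" and s: "\<And>z. F (z + s) = F z + Psi s" using assms H_def by auto
  show ps: "Psi (s+t) = Psi s + Psi t" using t[of s] by (simp add: Psi_def)
  show "s + t \<in> H" unfolding H_def using s t ps by (simp add: add.assoc[symmetric])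
qed

lemma H_neg: assumes "t \<in> H" shows "-t \<in> H" "Psi (-t) = - Psi t"
proof -
  have t: "\<And>z. F (z + t) = F z + Psi t" using assms H_def by auto
  have n: "F (z + - t) = F z - Psi t" for z using t[of "z - t"] by simp
  show ps: "Psi (-t) = - Psi t" using n[of 0] by (simp add: Psi_def)
  show "-t \<in> H" unfolding H_def using n ps by simp
qed

lemma H_zero: "0 \<in> H" "Psi 0 = 0" by (auto simp: H_def Psi_def)

lemma H_nat: assumes "t \<in> H" shows "of_nat n * t \<in> H \<and> Psi (of_nat n * t) = of_nat n * Psi t"
proof (induction n)
  case 0 then show ?case using H_zero by simp
next
  case (Suc n)
  then show ?case using H_add[of "of_nat n * t" t] assms by (simp add: distrib_right add.commute)
qed

lemma H_int: assumes "t \<in> H" shows "of_int n * t \<in> H" "Psi (of_int n * t) = of_int n * Psi t"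
proof -
  have "of_int n * t \<in> H \<and> Psi (of_int n * t) = of_int n * Psi t"
  proof (cases "n \<ge> 0")
    case True
    then obtain m where "n = int m" by (metis nonneg_eq_int)
    then show ?thesis using H_nat[OF assms, of m] by simp
  next
    case False
    define m where "m = nat (-n)"
    have m: "n = - int m" using False m_def by simp
    then show ?thesis using H_nat[OF assms, of m] H_neg[of "of_nat m * t"] by simp
  qed
  thus "of_int n * t \<in> H" "Psi (of_int n * t) = of_int n * Psi t" by auto
qed

lemma H_comb: assumes "s \<in> H" "t \<in> H"
  shows "of_int a * s - of_int b * t \<in> H" "Psi (of_int a * s - of_int b * t) = of_int a * Psi s - of_int b * Psi t"
  using H_add[OF H_int(1)[OF assms(1), of a] H_int(1)[OF assms(2), of "-b"]]
    H_int(2)[OF assms(1), of a] H_int(2)[OF assms(2), of "-b"] by auto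

lemma contPsi: "continuous_on UNIV Psi"
  unfolding Psi_def by (intro continuous_intros contF)

lemma H_closed: "closed H"
proof -
  have "H = (\<Inter>z. {t. F (z + t) = F z + Psi t})" by (auto simp: H_def)
  moreover have "closed {t. F (z + t) = F z + Psi t}" for z
    by (intro closed_Collect_eq continuous_intros contPsi continuous_on_compose2[OF contF]) auto
  ultimately show ?thesis by auto
qed

lemma shift_in_H:
  assumes "\<And>z. exp (F (z + t)) = c * exp (F z)"
  shows "t \<in> H"
proof -
  have c: "exp (F (z + t) - F z) = c" for z using assms[of z] by (simp add: exp_diff)
  have "F (z + t) - F z = F (0 + t) - F 0" for z
    by (rule const_exp[where k = "\<lambda>z. F (z + t) - F z", OF _ c])
       (intro continuous_intros contF continuous_on_compose2[OF contF]; auto)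
  thus ?thesis by (auto simp: H_def Psi_def algebra_simps)
qed

end


locale liftD = liftF +
  fixes d :: int
  assumes tpH: "2*pi*\<i> \<in> H" and tpPsi: "Psi (2*pi*\<i>) = of_int d * (2*pi*\<i>)"
begin

lemma cont_at0:
  assumes "continuous_on UNIV phi" "phi 0 = 0" "e > 0"
  shows "\<exists>\<delta>>0. \<forall>s. norm s < \<delta> \<longrightarrow> norm (phi s) < (e::real)"
proof -
  have "\<forall>\<epsilon>>0. \<exists>\<delta>>0. \<forall>x'. dist x' 0 < \<delta> \<longrightarrow> dist (phi x') (phi 0) < \<epsilon>"
    using assms(1) unfolding continuous_on_iff by blast
  thus ?thesis using assms(2,3) by (simp add: dist_norm)
qed

lemma E0: assumes t: "t \<in> H" "Re t = 0" shows "Psi t = of_int d * t"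
proof -
  have "Psi t - of_int d * t = 0"
  proof (rule dirichlet_kill[where x = "Im t" and x0 = "2*pi"])
    fix e :: real assume e: "e > 0"
    define phi where "phi s = Psi s - of_int d * s" for s
    have "continuous_on UNIV phi" unfolding phi_def by (intro continuous_intros contPsi)
    moreover have "phi 0 = 0" using H_zero by (simp add: phi_def)
    ultimately obtain \<delta> where d: "\<delta> > 0" "\<And>s. norm s < \<delta> \<Longrightarrow> norm (phi s) < e"
      using cont_at0 e by blast
    have tt: "t = \<i> * of_real (Im t)" using t(2) by (simp add: complex_eq_iff)
    show "\<exists>\<delta>>0. \<forall>a b::int. \<bar>of_int a*Im t - of_int b*(2*pi)\<bar> < \<delta> \<longrightarrow> norm (of_int a * (Psi t - of_int d * t)) < e"
    proof (intro exI[of _ \<delta>] conjI allI impI d(1))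
      fix a b :: int assume ab: "\<bar>of_int a*Im t - of_int b*(2*pi)\<bar> < \<delta>"
      define s where "s = of_int a * t - of_int b * (2*pi*\<i>)"
      have "Psi s = of_int a * Psi t - of_int b * Psi (2*pi*\<i>)"
        unfolding s_def by (rule H_comb(2)[OF t(1) tpH])
      hence "phi s = of_int a * (Psi t - of_int d * t)"
        unfolding phi_def s_def tpPsi by (simp add: algebra_simps)
      moreover have "norm s = \<bar>of_int a*Im t - of_int b*(2*pi)\<bar>"
      proof -
        define X where "X = of_int a*Im t - of_int b*(2*pi)"
        have "s = \<i> * of_real X"
          unfolding s_def X_def by (subst tt) (simp add: algebra_simps)
        hence "norm s = \<bar>X\<bar>" by (simp add: norm_mult)
        thus ?thesis by (simp add: X_def)
      qed
      ultimately show "norm (of_int a * (Psi t - of_int d * t)) < e" using d ab by metis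
    qed
  qed simp
  thus ?thesis by simp
qed

lemma C0:
  fixes \<kappa> :: complex and e :: real
  assumes e: "e > 0"
  defines "Phi \<equiv> \<lambda>s. Psi s - of_int d * \<i> * of_real (Im s) - \<kappa> * of_real (Re s)"
  shows "\<exists>\<delta>>0. \<forall>s\<in>H. \<bar>Re s\<bar> < \<delta> \<longrightarrow> norm (Phi s) < e"
proof -
  have contPhi: "continuous_on UNIV Phi" unfolding Phi_def
    by (intro continuous_intros contPsi)
  have Phi0: "Phi s = 0" if "s \<in> H" "Re s = 0" for s
  proof -
    have "Psi s = of_int d * s" using E0 that by blast
    moreover have "s = \<i> * of_real (Im s)" using that(2) by (simp add: complex_eq_iff)
    ultimately show ?thesis unfolding Phi_def using that(2) by (metis add.right_neutral diff_self mult.assoc mult_zero_right of_real_0)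
  qed
  have Phiper: "Phi (of_int 1 * s - of_int k * (2*pi*\<i>)) = Phi s" if "s \<in> H" for s k
  proof -
    have "Psi (of_int 1 * s - of_int k * (2*pi*\<i>)) = of_int 1 * Psi s - of_int k * Psi (2*pi*\<i>)"
      by (rule H_comb(2)[OF that tpH])
    thus ?thesis unfolding Phi_def tpPsi by (simp add: algebra_simps)
  qed
  define K where "K = H \<inter> {s. \<bar>Re s\<bar> \<le> 1 \<and> 0 \<le> Im s \<and> Im s \<le> 2*pi \<and> e \<le> norm (Phi s)}"
  have "closed {s. \<bar>Re s\<bar> \<le> 1 \<and> 0 \<le> Im s \<and> Im s \<le> 2*pi \<and> e \<le> norm (Phi s)}"
    by (intro closed_Collect_conj closed_Collect_le continuous_intros contPhi continuous_on_compose2[OF contPhi]) auto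
  hence clK: "closed K" unfolding K_def using H_closed by auto
  have "K \<subseteq> cball 0 (1 + 2*pi)"
  proof
    fix s assume "s \<in> K"
    hence "\<bar>Re s\<bar> \<le> 1" "\<bar>Im s\<bar> \<le> 2*pi" unfolding K_def by auto
    hence "norm s \<le> 1 + 2*pi" using cmod_le[of s] by linarith
    thus "s \<in> cball 0 (1 + 2*pi)" by simp
  qed
  hence cK: "compact K" using clK compact_eq_bounded_closed bounded_cball bounded_subset by blast
  obtain \<delta> where dpos: "\<delta> > 0" and dle: "\<delta> \<le> 1" and dK: "\<And>s. s \<in> K \<Longrightarrow> \<delta> \<le> \<bar>Re s\<bar>"
  proof (cases "K = {}")
    case True thus ?thesis using that[of 1] by auto
  next
    case False
    have "continuous_on K (\<lambda>s. \<bar>Re s\<bar>)" by (intro continuous_intros)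
    then obtain s0 where s0: "s0 \<in> K" "\<And>s. s \<in> K \<Longrightarrow> \<bar>Re s0\<bar> \<le> \<bar>Re s\<bar>"
      using continuous_attains_inf[OF cK False] by blast
    have "Re s0 \<noteq> 0"
    proof
      assume "Re s0 = 0"
      hence "Phi s0 = 0" using Phi0 s0(1) K_def by blast
      thus False using s0(1) e K_def by auto
    qed
    thus ?thesis using that[of "min 1 \<bar>Re s0\<bar>"] s0 by fastforce
  qed
  show ?thesis
  proof (intro exI[of _ \<delta>] conjI ballI impI)
    show "\<delta> > 0" by (rule dpos)
  next
    fix s assume s: "s \<in> H" "\<bar>Re s\<bar> < \<delta>"
    define k where "k = \<lfloor>Im s / (2*pi)\<rfloor>"
    define s' where "s' = of_int 1 * s - of_int k * (2*pi*\<i>)"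
    have s'H: "s' \<in> H" unfolding s'_def by (rule H_comb(1)[OF s(1) tpH])
    have "of_int k \<le> Im s / (2*pi)" "Im s / (2*pi) < of_int k + 1" unfolding k_def by linarith+
    hence "2*pi* of_int k \<le> Im s" "Im s < 2*pi*(of_int k + 1)"
      by (simp_all add: field_simps)
    moreover have "Im s' = Im s - 2*pi* of_int k" "Re s' = Re s" unfolding s'_def by simp_all
    ultimately have bnds: "0 \<le> Im s'" "Im s' \<le> 2*pi" by (simp_all add: algebra_simps)
    show "norm (Phi s) < e"
    proof (rule ccontr)
      assume "\<not> norm (Phi s) < e"
      hence "s' \<in> K" unfolding K_def using s'H bnds \<open>Re s' = Re s\<close> s(2) dle Phiper[OF s(1)]
        by (auto simp: s'_def)
      hence "\<delta> \<le> \<bar>Re s\<bar>" using dK \<open>Re s' = Re s\<close> by metis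
      thus False using s(2) by simp
    qed
  qed
qed

lemma linear_part:
  assumes t0: "t0 \<in> H" "Re t0 > 0"
  defines "\<kappa> \<equiv> (Psi t0 - of_int d * \<i> * of_real (Im t0)) / of_real (Re t0)"
  shows "\<forall>t\<in>H. Psi t = of_int d * \<i> * of_real (Im t) + \<kappa> * of_real (Re t)"
proof
  fix t assume t: "t \<in> H"
  define Phi where "Phi s = Psi s - of_int d * \<i> * of_real (Im s) - \<kappa> * of_real (Re s)" for s
  have Pt0: "Phi t0 = 0" using t0(2) unfolding Phi_def \<kappa>_def by (simp add: field_simps)
  have "Phi t = 0"
  proof (rule dirichlet_kill[where x = "Re t" and x0 = "Re t0"])
    fix e :: real assume e: "e > 0"
    obtain \<delta> where d: "\<delta> > 0" "\<And>s. s\<in>H \<Longrightarrow> \<bar>Re s\<bar> < \<delta> \<Longrightarrow> norm (Phi s) < e"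
      using C0[OF e, of \<kappa>] unfolding Phi_def by blast
    show "\<exists>\<delta>>0. \<forall>a b::int. \<bar>of_int a*Re t - of_int b*Re t0\<bar> < \<delta> \<longrightarrow> norm (of_int a * Phi t) < e"
    proof (intro exI[of _ \<delta>] conjI allI impI d(1))
      fix a b :: int assume ab: "\<bar>of_int a*Re t - of_int b*Re t0\<bar> < \<delta>"
      define s where "s = of_int a * t - of_int b * t0"
      have sH: "s \<in> H" unfolding s_def by (rule H_comb(1)[OF t t0(1)])
      have "Psi s = of_int a * Psi t - of_int b * Psi t0"
        unfolding s_def by (rule H_comb(2)[OF t t0(1)])
      hence "Phi s = of_int a * Phi t - of_int b * Phi t0"
        unfolding Phi_def s_def by (simp add: algebra_simps)
      hence "Phi s = of_int a * Phi t" using Pt0 by simp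
      moreover have "Re s = of_int a*Re t - of_int b*Re t0" unfolding s_def by simp
      ultimately show "norm (of_int a * Phi t) < e" using d sH ab by metis
    qed
  qed (use t0 in simp)
  thus "Psi t = of_int d * \<i> * of_real (Im t) + \<kappa> * of_real (Re t)" unfolding Phi_def
    by (simp add: algebra_simps)
qed

end


definition hmap :: "complex \<Rightarrow> complex \<Rightarrow> complex" where
  "hmap a w = w * rpow_c (norm w) a"

lemma norm_hmap: "norm (hmap a w) = norm w powr (1 + Re a)"
proof (cases "w = 0")
  case True thus ?thesis by (simp add: hmap_def)
next
  case False
  have "norm (hmap a w) = norm w * exp (Re a * ln (norm w))"
    by (simp add: hmap_def rpow_c_def norm_mult)
  moreover have "norm w powr (1+Re a) = exp ((1 + Re a) * ln (norm w))" using False by (simp add: powr_def)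
  moreover have "exp ((1 + Re a) * ln (norm w)) = exp (ln (norm w)) * exp (Re a * ln (norm w))"
    by (simp add: distrib_right exp_add)
  ultimately show "norm (hmap a w) = norm w powr (1+Re a)" using False by simp
qed

lemma t1: "w \<noteq> 0 \<Longrightarrow> isCont (\<lambda>w. ln (norm w)) (w::complex)"
  by (rule isCont_ln'[OF continuous_norm[OF continuous_ident]]) simp
lemma t2: "w \<noteq> 0 \<Longrightarrow> isCont (\<lambda>w. w * exp (a * of_real (ln (norm w)))) (w::complex)"
  by (intro continuous_mult continuous_ident continuous_exp continuous_of_real t1 continuous_const)
lemma t3: "Re a > -1 \<Longrightarrow> ((\<lambda>w::complex. norm w powr (1 + Re a)) \<longlongrightarrow> 0) (at 0)"
  by (rule tendsto_zero_powrI[OF tendsto_norm_zero[OF tendsto_ident_at] tendsto_const]) auto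

lemma hmap_cont: assumes a: "Re a > -1" shows "continuous_on UNIV (hmap a)"
proof -
  have "isCont (hmap a) w" for w
  proof (cases "w = 0")
    case False
    thus ?thesis unfolding hmap_def rpow_c_def by (rule t2)
  next
    case True
    have "(hmap a \<longlongrightarrow> 0) (at 0)"
      by (rule Lim_null_comparison[where g = "\<lambda>w. norm w powr (1 + Re a)", OF _ t3[OF a]])
         (simp add: norm_hmap)
    moreover have "hmap a 0 = 0" by (simp add: hmap_def)
    ultimately show ?thesis using True by (simp add: isCont_def)
  qed
  thus ?thesis by (simp add: continuous_at_imp_continuous_on)
qed

lemma hmap_inv:
  assumes a: "Re a > -1"
  assumes b_def: "b = - a / of_real (1 + Re a)"
  shows "hmap b (hmap a w) = w"
proof (cases "w = 0")
  case True thus ?thesis by (simp add: hmap_def)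
next
  case False
  have pos: "1 + Re a > 0" using a by simp
  have nz: "1 + complex_of_real (Re a) \<noteq> 0" using pos by (metis of_real_1 of_real_add of_real_eq_0_iff less_irrefl)
  have "hmap a w \<noteq> 0" using False by (simp add: hmap_def rpow_c_def)
  have L: "ln (norm (hmap a w)) = (1 + Re a) * ln (norm w)"
    using False by (simp add: norm_hmap ln_powr)
  have nz': "complex_of_real (1 + Re a) \<noteq> 0" by (metis pos of_real_eq_0_iff less_irrefl)
  have "hmap b (hmap a w) = hmap a w * exp (b * of_real (ln (norm (hmap a w))))"
    by (simp only: hmap_def[of b] rpow_c_def)
  also have "\<dots> = w * exp (a * of_real (ln (norm w))) * exp (b * of_real ((1 + Re a) * ln (norm w)))"
    by (subst L) (simp only: hmap_def[of a] rpow_c_def)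
  also have "b * of_real ((1 + Re a) * ln (norm w)) = - (a * of_real (ln (norm w)))"
    unfolding of_real_mult b_def using nz' by (simp del: of_real_add)
  finally show ?thesis by (simp add: mult.assoc exp_minus exp_add[symmetric])
qed

lemma hmap_homeo:
  assumes a: "Re a > -1"
  shows "homeomorphism UNIV UNIV (hmap a) (hmap (- a / of_real (1 + Re a)))"
proof -
  define b where "b = - a / of_real (1 + Re a)"
  have pos: "1 + Re a > 0" using a by simp
  have nz: "1 + complex_of_real (Re a) \<noteq> 0" using pos by (metis of_real_1 of_real_add of_real_eq_0_iff less_irrefl)
  have Reb: "Re b = - Re a / (1 + Re a)" unfolding b_def
    by (simp add: Re_divide_of_real)
  have b1: "Re b > -1" using pos a unfolding Reb by (simp add: field_simps)
  have nz': "complex_of_real (1 + Re a) \<noteq> 0" by (metis pos of_real_eq_0_iff less_irrefl)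
  have "1 + Re b = 1 / (1 + Re a)" unfolding Reb using pos by (simp add: field_simps)
  hence ab: "- b / of_real (1 + Re b) = a" unfolding b_def using nz' by (simp del: of_real_add)
  have i1: "hmap b (hmap a x) = x" for x by (rule hmap_inv[OF a b_def])
  have i2: "hmap a (hmap b x) = x" for x by (rule hmap_inv[OF b1 ab[symmetric]])
  show ?thesis unfolding b_def[symmetric]
    by (intro homeomorphismI hmap_cont a b1) (auto simp: i1 i2)
qed

lemma hmap_eq:
  assumes "p \<noteq> 0"
  shows "hmap a (p * w) = p * rpow_c (norm p) a * hmap a w"
proof (cases "w = 0")
  case True thus ?thesis by (simp add: hmap_def)
next
  case False
  have "ln (norm (p * w)) = ln (norm p) + ln (norm w)"
    using False assms by (simp add: norm_mult ln_mult)
  hence "rpow_c (norm (p * w)) a = rpow_c (norm p) a * rpow_c (norm w) a"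
    unfolding rpow_c_def by (simp only: of_real_add distrib_left exp_add)
  thus ?thesis unfolding hmap_def by (simp only: mult_ac)
qed

lemma if_part:
  assumes a: "Re a > -1"
  shows "(\<forall>r\<in>I. q r = p r * rpow_c (norm (p r)) a) \<Longrightarrow> (\<forall>r\<in>I. p r \<noteq> 0) \<Longrightarrow>
      \<exists>f :: complex \<Rightarrow> complex. (\<exists>g. homeomorphism UNIV UNIV f g) \<and> (\<forall>r\<in>I. \<forall>w. f (p r * w) = q r * f w)"
    and "(\<forall>r\<in>I. q r = cnj (p r) * rpow_c (norm (p r)) a) \<Longrightarrow> (\<forall>r\<in>I. p r \<noteq> 0) \<Longrightarrow>
      \<exists>f :: complex \<Rightarrow> complex. (\<exists>g. homeomorphism UNIV UNIV f g) \<and> (\<forall>r\<in>I. \<forall>w. f (p r * w) = q r * f w)"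
proof -
  assume q: "\<forall>r\<in>I. q r = p r * rpow_c (norm (p r)) a" and pnz: "\<forall>r\<in>I. p r \<noteq> 0"
  show "\<exists>f :: complex \<Rightarrow> complex. (\<exists>g. homeomorphism UNIV UNIV f g) \<and> (\<forall>r\<in>I. \<forall>w. f (p r * w) = q r * f w)"
  proof (intro exI conjI ballI allI)
    show "homeomorphism UNIV UNIV (hmap a) (hmap (- a / of_real (1 + Re a)))" by (rule hmap_homeo[OF a])
    fix r w assume r: "r \<in> I"
    show "hmap a (p r * w) = q r * hmap a w" using hmap_eq[of "p r" a w] q pnz r by simp
  qed
next
  assume q: "\<forall>r\<in>I. q r = cnj (p r) * rpow_c (norm (p r)) a" and pnz: "\<forall>r\<in>I. p r \<noteq> 0"
  have a': "Re (cnj a) > -1" using a by simp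
  have hc: "homeomorphism UNIV UNIV cnj cnj"
    by (intro homeomorphismI continuous_intros) auto
  obtain g where hg: "homeomorphism UNIV UNIV (hmap (cnj a)) g" using hmap_homeo[OF a'] by blast
  have H: "homeomorphism UNIV UNIV (cnj \<circ> hmap (cnj a)) (g \<circ> cnj)"
    by (rule homeomorphism_compose[OF hg hc])
  have "(cnj \<circ> hmap (cnj a)) (p r * w) = q r * (cnj \<circ> hmap (cnj a)) w" if "r \<in> I" for r w
  proof -
    have "(cnj \<circ> hmap (cnj a)) (p r * w) = cnj (p r * rpow_c (norm (p r)) (cnj a) * hmap (cnj a) w)"
      using hmap_eq[of "p r" "cnj a" w] pnz that by simp
    also have "\<dots> = cnj (p r) * rpow_c (norm (p r)) a * cnj (hmap (cnj a) w)"
      by (simp add: rpow_c_def exp_cnj)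
    finally show ?thesis using q that by simp
  qed
  thus "\<exists>f :: complex \<Rightarrow> complex. (\<exists>g. homeomorphism UNIV UNIV f g) \<and> (\<forall>r\<in>I. \<forall>w. f (p r * w) = q r * f w)"
    using H by (intro exI[of _ "cnj \<circ> hmap (cnj a)"] conjI exI[of _ "g \<circ> cnj"]) blast+
qed



lemma exp_2pi_shift: "exp (z + 2*pi*\<i>) = exp z"
  by (simp add: exp_add exp_two_pi_i)

lemma only_if:
  fixes f g :: "complex \<Rightarrow> complex"
  assumes hom: "homeomorphism UNIV UNIV f g"
    and eq: "\<forall>r\<in>I. \<forall>w. f (p r * w) = q r * f w"
    and pnz: "\<forall>r\<in>I. p r \<noteq> 0"
  shows "\<exists>\<alpha>::complex. Re \<alpha> > -1 \<and> ((\<forall>r\<in>I. q r = p r * rpow_c (norm (p r)) \<alpha>) \<or>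
             (\<forall>r\<in>I. q r = cnj (p r) * rpow_c (norm (p r)) \<alpha>))"
proof -
  have gf: "\<And>x. g (f x) = x" and fg: "\<And>y. f (g y) = y"
    and contf: "continuous_on UNIV f" and contg: "continuous_on UNIV g"
    using hom unfolding homeomorphism_def by auto
  show ?thesis
  proof (cases "\<forall>r\<in>I. p r = 1")
    case True
    have "q r = 1" if r: "r \<in> I" for r
    proof -
      have "f (p r * g 1) = q r * f (g 1)" using eq r by blast
      thus ?thesis using True r fg[of 1] by simp
    qed
    thus ?thesis using True by (intro exI[of _ 0]) (simp add: rpow_c_def)
  next
    case False
    then obtain r0 where r0: "r0 \<in> I" "p r0 \<noteq> 1" by blast
    have f0: "f 0 = 0"
    proof (rule ccontr)
      assume nz: "f 0 \<noteq> 0"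
      have "f 0 = q r0 * f 0" using eq r0(1) by (metis mult_zero_right)
      hence q1: "q r0 = 1" using nz by simp
      have "f (p r0 * 1) = q r0 * f 1" using eq r0(1) by blast
      hence "f (p r0) = f 1" using q1 by simp
      hence "p r0 = 1" using gf by metis
      thus False using r0 by simp
    qed
    have g0: "g 0 = 0" using gf[of 0] f0 by simp
    have fnz: "f w \<noteq> 0" if "w \<noteq> 0" for w using gf[of w] g0 that by metis
    have gnz: "g w \<noteq> 0" if "w \<noteq> 0" for w using fg[of w] f0 that by metis
    have sc: "simply_connected (UNIV :: complex set)" by (rule convex_imp_simply_connected) simp
    have cfe: "continuous_on UNIV (\<lambda>z. f (exp z))"
      by (rule continuous_on_compose2[OF contf continuous_on_exp[OF continuous_on_id]]) auto
    have cge: "continuous_on UNIV (\<lambda>z. g (exp z))"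
      by (rule continuous_on_compose2[OF contg continuous_on_exp[OF continuous_on_id]]) auto
    obtain F where contF: "continuous_on UNIV F" and Fe: "\<And>z. f (exp z) = exp (F z)"
      using continuous_logarithm_on_simply_connected[OF cfe sc locally_path_connected_UNIV] fnz
      by (metis UNIV_I exp_not_eq_zero)
    obtain G where contG: "continuous_on UNIV G" and Ge: "\<And>z. g (exp z) = exp (G z)"
      using continuous_logarithm_on_simply_connected[OF cge sc locally_path_connected_UNIV] gnz
      by (metis UNIV_I exp_not_eq_zero)
    interpret liftF F by unfold_locales (rule contF)
    have tpH: "2*pi*\<i> \<in> H"
      by (rule shift_in_H[where c = 1]) (simp only: Fe[symmetric] exp_2pi_shift mult_1_left)
    have "exp (F (2*pi*\<i>)) = exp (F 0)"
      using Fe[of "2*pi*\<i>"] Fe[of 0] by (simp add: exp_two_pi_i)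
    then obtain n :: int where n: "F (2*pi*\<i>) = F 0 + (of_int (2 * n) * pi) * \<i>"
      using exp_eq by blast
    have tpPsi: "Psi (2*pi*\<i>) = of_int n * (2*pi*\<i>)" using n by (simp add: Psi_def)
    have n1: "n = 1 \<or> n = -1"
    proof -
      have "exp (G (2*pi*\<i>)) = exp (G 0)"
        using Ge[of "2*pi*\<i>"] Ge[of 0] by (simp add: exp_two_pi_i)
      then obtain m :: int where m: "G (2*pi*\<i>) = G 0 + (of_int (2 * m) * pi) * \<i>"
        using exp_eq by blast
      have "exp (F (G z) - z) = 1" for z
        using Fe[of "G z"] Ge[of z] fg[of "exp z"] by (simp add: exp_diff)
      moreover have "continuous_on UNIV (\<lambda>z. F (G z) - z)"
        by (intro continuous_intros continuous_on_compose2[OF contF contG]) auto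
      ultimately have k: "F (G z) - z = F (G 0) - 0" for z
        using const_exp[where k = "\<lambda>z. F (G z) - z" and c = 1] by blast
      have "F (G 0 + of_int m * (2*pi*\<i>)) = F (G 0) + Psi (of_int m * (2*pi*\<i>))"
        using H_int(1)[OF tpH, of m] unfolding H_def by blast
      also have "Psi (of_int m * (2*pi*\<i>)) = of_int m * (of_int n * (2*pi*\<i>))"
        using H_int(2)[OF tpH, of m] tpPsi by simp
      finally have "F (G (2*pi*\<i>)) = F (G 0) + of_int m * (of_int n * (2*pi*\<i>))"
        using m by (simp add: algebra_simps)
      moreover have "F (G (2*pi*\<i>)) = F (G 0) + 2*pi*\<i>" using k[of "2*pi*\<i>"] by (simp add: diff_eq_eq)
      ultimately have "of_int (m * n) * (2*pi*\<i>) = 1 * (2*pi*\<i>)" by (simp add: algebra_simps)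
      hence "of_int (m * n) = (1::complex)" by (subst (asm) mult_cancel_right) simp
      hence "m * n = 1" by (metis of_int_1 of_int_eq_iff)
      thus ?thesis by (auto simp: zmult_eq_1_iff)
    qed
    interpret liftD F n by unfold_locales (rule tpH, rule tpPsi)
    have pos: "Re (Psi t) > 0" if t: "t \<in> H" "Re t > 0" for t
    proof (rule ccontr)
      assume "\<not> Re (Psi t) > 0"
      hence le: "Re (Psi t) \<le> 0" by simp
      define M where "M = norm (exp (F 0))"
      have "compact (g ` cball 0 M)"
        by (rule compact_continuous_image[OF continuous_on_subset[OF contg]]) auto
      then obtain B where B: "\<And>x. x \<in> g ` cball 0 M \<Longrightarrow> norm x \<le> B"
        using compact_imp_bounded bounded_iff by metis
      have bnd: "exp (real N * Re t) \<le> B" for N :: nat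
      proof -
        have "F (0 + of_nat N * t) = F 0 + Psi (of_nat N * t)"
          using H_nat[OF t(1), of N] unfolding H_def by blast
        hence FN: "F (of_nat N * t) = F 0 + of_nat N * Psi t" using H_nat[OF t(1), of N] by simp
        have "norm (f (exp (of_nat N * t))) = M * exp (real N * Re (Psi t))"
          unfolding Fe FN M_def by (simp add: exp_add norm_mult)
        also have "\<dots> \<le> M * 1" unfolding M_def
          using le by (intro mult_left_mono) (auto simp: mult_nonneg_nonpos)
        finally have "f (exp (of_nat N * t)) \<in> cball 0 M" by simp
        hence "g (f (exp (of_nat N * t))) \<in> g ` cball 0 M" by blast
        hence "norm (exp (of_nat N * t)) \<le> B" using B gf by metis
        thus ?thesis by simp
      qed
      obtain N :: nat where N: "real N > B / Re t" using reals_Archimedean2 by blast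
      have "1 + real N * Re t \<le> exp (real N * Re t)" by (rule exp_ge_add_one_self)
      moreover have "real N * Re t > B" using N t(2) by (simp add: field_simps)
      ultimately show False using bnd[of N] by linarith
    qed
    obtain \<kappa> where kpos: "Re \<kappa> > 0" and kH: "\<forall>t\<in>H. Psi t = of_int n * \<i> * of_real (Im t) + \<kappa> * of_real (Re t)"
    proof (cases "\<exists>t0\<in>H. Re t0 > 0")
      case True
      then obtain t0 where t0: "t0 \<in> H" "Re t0 > 0" by blast
      define \<kappa> where "\<kappa> = (Psi t0 - of_int n * \<i> * of_real (Im t0)) / of_real (Re t0)"
      have lin: "\<forall>t\<in>H. Psi t = of_int n * \<i> * of_real (Im t) + \<kappa> * of_real (Re t)"
        using linear_part[OF t0] unfolding \<kappa>_def by blast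
      have "Re (Psi t0) = Re \<kappa> * Re t0" using lin t0(1) by simp
      hence "Re \<kappa> > 0" using pos[OF t0] t0(2) by (metis zero_less_mult_pos2)
      thus ?thesis using that lin by blast
    next
      case False
      have "\<forall>t\<in>H. Psi t = of_int n * \<i> * of_real (Im t) + 1 * of_real (Re t)"
      proof
        fix t assume t: "t \<in> H"
        have "Re t = 0"
        proof (rule ccontr)
          assume "Re t \<noteq> 0"
          then consider "Re t > 0" | "Re (-t) > 0" by fastforce
          thus False using False t H_neg(1)[OF t] by cases blast+
        qed
        moreover have "t = \<i> * of_real (Im t)" using \<open>Re t = 0\<close> by (simp add: complex_eq_iff)
        ultimately show "Psi t = of_int n * \<i> * of_real (Im t) + 1 * of_real (Re t)"
          using E0[OF t] by (metis add.right_neutral mult.assoc mult_zero_right of_real_0)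
      qed
      thus ?thesis using that[of 1] by simp
    qed
    have qr: "q r = exp (of_int n * \<i> * of_real (Im (Ln (p r))) + \<kappa> * of_real (Re (Ln (p r))))"
      if r: "r \<in> I" for r
    proof -
      define l where "l = Ln (p r)"
      have el: "exp l = p r" unfolding l_def using pnz r by simp
      have lH: "l \<in> H"
      proof (rule shift_in_H[where c = "q r"])
        fix z
        have "exp (F (z + l)) = f (p r * exp z)" by (simp add: Fe[symmetric] exp_add el mult.commute)
        also have "\<dots> = q r * exp (F z)" using eq r Fe by simp
        finally show "exp (F (z + l)) = q r * exp (F z)" .
      qed
      have "exp (F l) = q r * exp (F 0)"
        using Fe[of l] Fe[of 0] eq r el by (metis exp_zero mult.right_neutral)
      hence "exp (Psi l) = q r" by (simp add: Psi_def exp_diff)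
      thus ?thesis using kH lH unfolding l_def by simp
    qed
    show ?thesis
    proof (intro exI[of _ "\<kappa> - 1"] conjI)
      show "Re (\<kappa> - 1) > -1" using kpos by simp
      have key: "exp (X + (\<kappa> - 1) * of_real (Re (Ln (p r)))) = exp X * rpow_c (norm (p r)) (\<kappa> - 1)"
        if "r \<in> I" for r X
        unfolding rpow_c_def using pnz that by (simp add: Re_Ln exp_add)
      show "(\<forall>r\<in>I. q r = p r * rpow_c (norm (p r)) (\<kappa> - 1)) \<or>
            (\<forall>r\<in>I. q r = cnj (p r) * rpow_c (norm (p r)) (\<kappa> - 1))"
        using n1
      proof
        assume n: "n = 1"
        have "q r = p r * rpow_c (norm (p r)) (\<kappa> - 1)" if r: "r \<in> I" for r
        proof -
          have "q r = exp (Ln (p r) + (\<kappa> - 1) * of_real (Re (Ln (p r))))"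
            unfolding qr[OF r] n by (rule arg_cong[where f = exp]) (simp add: complex_eq_iff algebra_simps)
          thus ?thesis using key[OF r] pnz r by simp
        qed
        thus ?thesis by blast
      next
        assume n: "n = -1"
        have "q r = cnj (p r) * rpow_c (norm (p r)) (\<kappa> - 1)" if r: "r \<in> I" for r
        proof -
          have "q r = exp (cnj (Ln (p r)) + (\<kappa> - 1) * of_real (Re (Ln (p r))))"
            unfolding qr[OF r] n by (rule arg_cong[where f = exp]) (simp add: complex_eq_iff algebra_simps)
          also have "\<dots> = cnj (exp (Ln (p r))) * rpow_c (norm (p r)) (\<kappa> - 1)"
            using key[OF r] by (simp add: exp_cnj)
          finally show ?thesis using pnz r by simp
        qed
        thus ?thesis by blast
      qed
    qed
  qed
qed


theorem theorem3p1:
  fixes I :: "'i set" and p q :: "'i \<Rightarrow> complex"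
  assumes "\<And>r. r \<in> I \<Longrightarrow> p r \<noteq> 0"
      and "\<And>r. r \<in> I \<Longrightarrow> q r \<noteq> 0"
  shows "(\<exists>f :: complex \<Rightarrow> complex. (\<exists>g. homeomorphism UNIV UNIV f g) \<and>
            (\<forall>r\<in>I. \<forall>w. f (p r * w) = q r * f w))
     \<longleftrightarrow> (\<exists>\<alpha> :: complex. Re \<alpha> > -1 \<and>
            ((\<forall>r\<in>I. q r = p r * rpow_c (norm (p r)) \<alpha>) \<or>
             (\<forall>r\<in>I. q r = cnj (p r) * rpow_c (norm (p r)) \<alpha>)))"
proof
  assume "\<exists>f :: complex \<Rightarrow> complex. (\<exists>g. homeomorphism UNIV UNIV f g) \<and>
            (\<forall>r\<in>I. \<forall>w. f (p r * w) = q r * f w)"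
  then obtain f g where "homeomorphism UNIV UNIV f g" "\<forall>r\<in>I. \<forall>w. f (p r * w) = q r * f w"
    by blast
  thus "\<exists>\<alpha> :: complex. Re \<alpha> > -1 \<and>
            ((\<forall>r\<in>I. q r = p r * rpow_c (norm (p r)) \<alpha>) \<or>
             (\<forall>r\<in>I. q r = cnj (p r) * rpow_c (norm (p r)) \<alpha>))"
    using only_if assms(1) by blast
next
  assume "\<exists>\<alpha> :: complex. Re \<alpha> > -1 \<and>
            ((\<forall>r\<in>I. q r = p r * rpow_c (norm (p r)) \<alpha>) \<or>
             (\<forall>r\<in>I. q r = cnj (p r) * rpow_c (norm (p r)) \<alpha>))"
  then obtain a where a: "Re a > -1" and
    o: "(\<forall>r\<in>I. q r = p r * rpow_c (norm (p r)) a) \<or> (\<forall>r\<in>I. q r = cnj (p r) * rpow_c (norm (p r)) a)"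
    by blast
  have pnz: "\<forall>r\<in>I. p r \<noteq> 0" using assms(1) by blast
  from o show "\<exists>f :: complex \<Rightarrow> complex. (\<exists>g. homeomorphism UNIV UNIV f g) \<and>
            (\<forall>r\<in>I. \<forall>w. f (p r * w) = q r * f w)"
    using if_part[OF a] pnz by blast
qed

end
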